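(* Let $N$ be a numerical monoid and let $r\in\mathbb{Q}_{>1}\setminus\mathbb{N}$ be such that $S_{r,N}$ is atomic. Let $x$ be a nonzero element of $S_{r,N}$ and let $z=\sum_{i=0}^{n}c_i r^{s_i}\in\mathsf{Z}(x)$ with $c_0,\dots,c_n\in\mathbb{N}$. Then: (1) $|z|=\min\mathsf{L}(x)$ if and only if $c_i<\mathsf{n}(r)^{\delta_i}$ for every $i\in\{0,\dots,n\}$; (2) there is exactly one factorization of $x$ of minimum length; (3) $|z|=\max\mathsf{L}(x)$ if and only if $c_i<\mathsf{d}(r)^{\delta_{i-1}}$ for every $i\in\{1,\dots,n\}$; (4) there is exactly one factorization of $x$ of maximum length; (5) if $c_i<\mathsf{d}(r)$ for every $i\in\{0,\dots,n\}$, then $|\mathsf{Z}(x)|=1$.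
   Context: $\mathbb{N}=\{0,1,2,\dots\}$. A numerical monoid $N$ is an additive submonoid of $\mathbb{N}$ with finite complement in $\mathbb{N}$. For $r\in\mathbb{Q}_{>0}$ write $r=\mathsf{n}(r)/\mathsf{d}(r)$ with $\mathsf{n}(r),\mathsf{d}(r)$ coprime positive integers. The exponential Puiseux semiring $S_{r,N}$ is the additive submonoid of $\mathbb{Q}_{\ge 0}$ generated by $\{r^k: k\in N\}$. Let $s_0<s_1<s_2<\cdots$ be the elements of $N$ in increasing order (so $s_0=0$) and $\delta_n=s_{n+1}-s_n$. When $\mathsf{n}(r)>1$ and $\mathsf{d}(r)>1$, $S_{r,N}$ is atomic with set of atoms $\{r^{s}: s\in N\}$. For an atomic monoid $M$ (written additively), $\mathsf{Z}(M)$ is the free commutative monoid on the set of atoms, $\pi:\mathsf{Z}(M)\to M$ the homomorphism sending each atom to itself, $\mathsf{Z}(x)=\pi^{-1}(x)$ the set of factorizations of $x$, $|z|$ the number of atoms (with multiplicity) in $z$, and $\mathsf{L}(x)=\{|z|: z\in\mathsf{Z}(x)\}$ the set of lengths of $x$. A factorization $\sum c_i r^{s_i}$ means the formal sum with $c_i$ copies of the atom $r^{s_i}$. *)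

theory Defs
  imports Complex_Main "HOL-Library.Multiset" "HOL-Library.Infinite_Set"
begin

definition numerical_monoid :: "nat set \<Rightarrow> bool" where
  "numerical_monoid N \<longleftrightarrow> 0 \<in> N \<and> (\<forall>a\<in>N. \<forall>b\<in>N. a + b \<in> N) \<and> finite (UNIV - N)"

definition numer :: "rat \<Rightarrow> int" where "numer q = fst (quotient_of q)"
definition denom :: "rat \<Rightarrow> int" where "denom q = snd (quotient_of q)"

inductive_set puiseux :: "rat \<Rightarrow> nat set \<Rightarrow> rat set" for r N where
  zero: "0 \<in> puiseux r N"
| step: "x \<in> puiseux r N \<Longrightarrow> k \<in> N \<Longrightarrow> x + r ^ k \<in> puiseux r N"

definition atoms :: "rat set \<Rightarrow> rat set" where
  "atoms M = {a \<in> M. a \<noteq> 0 \<and> (\<forall>b\<in>M. \<forall>c\<in>M. a = b + c \<longrightarrow> b = 0 \<or> c = 0)}"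

definition atomic :: "rat set \<Rightarrow> bool" where
  "atomic M \<longleftrightarrow> (\<forall>x\<in>M. x \<noteq> 0 \<longrightarrow> (\<exists>z. set_mset z \<subseteq> atoms M \<and> sum_mset z = x))"

definition factorizations :: "rat set \<Rightarrow> rat \<Rightarrow> rat multiset set" where
  "factorizations M x = {z. set_mset z \<subseteq> atoms M \<and> sum_mset z = x}"

definition lengths :: "rat set \<Rightarrow> rat \<Rightarrow> nat set" where
  "lengths M x = size ` factorizations M x"

(* s_i: i-th element of N in increasing order; delta_i = s_{i+1} - s_i *)
definition elem :: "nat set \<Rightarrow> nat \<Rightarrow> nat" where
  "elem N i = enumerate N i"

definition gap :: "nat set \<Rightarrow> nat \<Rightarrow> nat" where
  "gap N i = elem N (Suc i) - elem N i"

definition fact_of :: "rat \<Rightarrow> nat set \<Rightarrow> nat \<Rightarrow> (nat \<Rightarrow> nat) \<Rightarrow> rat multiset" where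
  "fact_of r N n c = (\<Sum>i\<le>n. replicate_mset (c i) (r ^ elem N i))"

end

theory Submission
  imports Defs
begin


lemma int_identity:
  fixes r :: rat and p q :: int and s :: "nat \<Rightarrow> nat" and e :: "nat \<Rightarrow> int"
  assumes r: "r = of_int p / of_int q" and q: "q > 0" and mono: "mono s"
    and sum: "(\<Sum>j\<le>M. of_int (e j) * r ^ s j) = 0"
  shows "(\<Sum>j\<le>M. e j * p ^ s j * q ^ (s M - s j)) = 0"
proof -
  have t: "of_int (e j * p ^ s j * q ^ (s M - s j)) = of_int (e j) * r ^ s j * of_int q ^ s M"
    if "j \<le> M" for j
  proof -
    have le: "s j \<le> s M" using mono that by (simp add: monoD)
    have "of_int q ^ s M = (of_int q ^ s j * of_int q ^ (s M - s j) :: rat)"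
      using le by (simp add: power_add[symmetric])
    moreover have "r ^ s j * of_int q ^ s j = (of_int p ^ s j :: rat)"
      using q by (simp add: r power_divide)
    ultimately show ?thesis by (simp add: algebra_simps)
  qed
  have "(of_int (\<Sum>j\<le>M. e j * p ^ s j * q ^ (s M - s j)) :: rat)
      = (\<Sum>j\<le>M. of_int (e j) * r ^ s j) * of_int q ^ s M"
    unfolding of_int_sum sum_distrib_right by (rule sum.cong[OF refl], rule t, simp)
  also have "\<dots> = 0" using sum by simp
  finally show ?thesis by (simp only: of_int_eq_0_iff)
qed

lemma L1:
  fixes r :: rat and p q :: int and s :: "nat \<Rightarrow> nat" and e :: "nat \<Rightarrow> int"
  assumes r: "r = of_int p / of_int q" and q: "q > 0" and p: "p \<noteq> 0" and cop: "coprime p q"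
    and mono: "strict_mono s" and iM: "i \<le> M" and z: "\<And>j. j < i \<Longrightarrow> e j = 0"
    and sum: "(\<Sum>j\<le>M. of_int (e j) * r ^ s j) = 0"
  shows "p ^ (s (Suc i) - s i) dvd e i"
proof -
  define g where "g = s (Suc i) - s i"
  have smono: "mono s" using mono strict_mono_mono by blast
  have E: "(\<Sum>j\<le>M. e j * p ^ s j * q ^ (s M - s j)) = 0"
    by (rule int_identity[OF r q smono sum])
  have "p ^ s i * p ^ g dvd (\<Sum>j\<in>{..M} - {i}. e j * p ^ s j * q ^ (s M - s j))"
  proof (rule dvd_sum)
    fix j assume j: "j \<in> {..M} - {i}"
    show "p ^ s i * p ^ g dvd e j * p ^ s j * q ^ (s M - s j)"
    proof (cases "j < i")
      case True then show ?thesis using z by simp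
    next
      case False
      with j have "Suc i \<le> j" by auto
      hence "s (Suc i) \<le> s j" using smono by (simp add: monoD)
      moreover have "s i < s (Suc i)" using mono by (simp add: strict_mono_def)
      ultimately have "s j = s i + g + (s j - s i - g)" unfolding g_def by simp
      hence "p ^ s j = p ^ s i * p ^ g * p ^ (s j - s i - g)" by (metis power_add)
      thus ?thesis by simp
    qed
  qed
  moreover have "(\<Sum>j\<in>{..M} - {i}. e j * p ^ s j * q ^ (s M - s j)) = - (e i * p ^ s i * q ^ (s M - s i))"
    using E iM by (simp add: sum.remove[of "{..M}" i] eq_neg_iff_add_eq_0 add.commute)
  ultimately have "p ^ s i * p ^ g dvd p ^ s i * (e i * q ^ (s M - s i))"
    by (simp add: algebra_simps)
  hence "p ^ g dvd e i * q ^ (s M - s i)" using p by simp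
  moreover have "coprime (p ^ g) (q ^ (s M - s i))" using cop by simp
  ultimately have "p ^ g dvd e i" using coprime_dvd_mult_left_iff by blast
  thus ?thesis unfolding g_def .
qed

lemma L2:
  fixes r :: rat and p q :: int and s :: "nat \<Rightarrow> nat" and e :: "nat \<Rightarrow> int"
  assumes r: "r = of_int p / of_int q" and q: "q > 0" and cop: "coprime p q"
    and mono: "strict_mono s" and mM: "m \<le> M" and m1: "1 \<le> m" and z: "\<And>j. m < j \<Longrightarrow> e j = 0"
    and sum: "(\<Sum>j\<le>M. of_int (e j) * r ^ s j) = 0"
  shows "q ^ (s m - s (m - 1)) dvd e m"
proof -
  define g where "g = s m - s (m - 1)"
  have smono: "mono s" using mono strict_mono_mono by blast
  have E: "(\<Sum>j\<le>M. e j * p ^ s j * q ^ (s M - s j)) = 0"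
    by (rule int_identity[OF r q smono sum])
  have smM: "s m \<le> s M" using smono mM by (simp add: monoD)
  have "q ^ (s M - s m) * q ^ g dvd (\<Sum>j\<in>{..M} - {m}. e j * p ^ s j * q ^ (s M - s j))"
  proof (rule dvd_sum)
    fix j assume j: "j \<in> {..M} - {m}"
    show "q ^ (s M - s m) * q ^ g dvd e j * p ^ s j * q ^ (s M - s j)"
    proof (cases "m < j")
      case True then show ?thesis using z by simp
    next
      case False
      with j have "j \<le> m - 1" by auto
      hence "s j \<le> s (m - 1)" using smono by (simp add: monoD)
      moreover have "s (m - 1) < s m" using mono m1 by (simp add: strict_mono_def)
      ultimately have "s M - s j = (s M - s m) + g + (s (m - 1) - s j)" unfolding g_def using smM by simp
      hence "q ^ (s M - s j) = q ^ (s M - s m) * q ^ g * q ^ (s (m - 1) - s j)" by (metis power_add)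
      thus ?thesis by simp
    qed
  qed
  moreover have "(\<Sum>j\<in>{..M} - {m}. e j * p ^ s j * q ^ (s M - s j)) = - (e m * p ^ s m * q ^ (s M - s m))"
    using E mM by (simp add: sum.remove[of "{..M}" m] eq_neg_iff_add_eq_0 add.commute)
  ultimately have "q ^ (s M - s m) * q ^ g dvd q ^ (s M - s m) * (e m * p ^ s m)"
    by (simp add: algebra_simps)
  hence "q ^ g dvd e m * p ^ s m" using q by simp
  moreover have "coprime (q ^ g) (p ^ s m)" using cop by (simp add: coprime_commute)
  ultimately have "q ^ g dvd e m" using coprime_dvd_mult_left_iff by blast
  thus ?thesis unfolding g_def .
qed



lemma finite_range_bound:
  assumes "finite A" "A \<subseteq> range f" shows "\<exists>M. A \<subseteq> f ` {..(M::nat)}"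
  using assms
proof (induction A rule: finite_induct)
  case empty then show ?case by auto
next
  case (insert a A)
  then obtain M where M: "A \<subseteq> f ` {..M}" by auto
  from insert obtain j where j: "a = f j" by auto
  have "insert a A \<subseteq> f ` {..max M j}" using M j by auto
  then show ?case by blast
qed

lemma size_le_sum_mset:
  fixes w :: "rat multiset"
  assumes "\<forall>a\<in>#w. 1 \<le> a" shows "of_nat (size w) \<le> sum_mset w"
  using assms by (induction w) auto

lemma dvd_small_int: fixes a b :: int assumes "a dvd b" "\<bar>b\<bar> < a" shows "b = 0"
  proof (rule ccontr)
  assume "b \<noteq> 0"
  hence "\<bar>a\<bar> \<le> \<bar>b\<bar>" using assms(1) dvd_imp_le_int by blast
  thus False using assms(2) by linarith
qed

locale pset =
  fixes N :: "nat set" and r :: rat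
  assumes nm: "numerical_monoid N" and r1: "r > 1" and rN: "r \<notin> \<nat>"
begin

abbreviation "pp \<equiv> numer r"
abbreviation "qq \<equiv> denom r"
abbreviation "ss \<equiv> elem N"
abbreviation "gg i \<equiv> r ^ elem N i"
abbreviation "MM \<equiv> puiseux r N"

lemma infN: "infinite N"
proof
  assume "finite N"
  moreover have "finite (UNIV - N)" using nm by (simp add: numerical_monoid_def)
  ultimately have "finite (N \<union> (UNIV - N))" by simp
  thus False by simp
qed

lemma smono: "strict_mono ss"
  unfolding elem_def[abs_def] using strict_mono_enumerate[OF infN] by simp

lemma srange: "range ss = N"
  unfolding elem_def[abs_def] using range_enumerate[OF infN] by simp

lemma r_eq: "r = of_int pp / of_int qq"
  unfolding numer_def denom_def by (metis quotient_of_div prod.collapse)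
lemma q_pos: "qq > 0"
  unfolding denom_def by (rule quotient_of_denom_pos')
lemma cop: "coprime pp qq"
  unfolding numer_def denom_def by (metis quotient_of_coprime prod.collapse)

lemma q_ne1: "qq \<noteq> 1"
proof
  assume h: "qq = 1"
  hence "r = of_int pp" using r_eq by simp
  moreover have "pp > 0" using r1 r_eq q_pos h by simp
  ultimately have "r = of_nat (nat pp)" by simp
  thus False using rN by (metis of_nat_in_Nats)
qed

lemma q2: "qq \<ge> 2" using q_pos q_ne1 by linarith

lemma pq: "pp > qq"
proof -
  have "of_int pp / of_int qq > (1::rat)" using r1 r_eq by simp
  hence "of_int pp > (of_int qq :: rat)" using q_pos by (simp add: divide_less_eq)
  thus ?thesis by simp
qed

lemma rq_gen: "(r::rat) = of_int a / of_int b \<Longrightarrow> b > 0 \<Longrightarrow> r ^ k * of_int b ^ k = of_int a ^ k"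
  by (simp add: power_divide)

lemma rq: "r ^ k * of_int qq ^ k = of_int pp ^ k"
  by (rule rq_gen[OF r_eq q_pos])

lemma ginj: "gg i = gg j \<longleftrightarrow> i = j"
proof -
  have "gg i = gg j \<longleftrightarrow> ss i = ss j" using r1 by (simp add: power_inject_exp)
  also have "\<dots> \<longleftrightarrow> i = j" using smono strict_mono_eq by blast
  finally show ?thesis .
qed

lemma gge1: "gg i \<ge> 1" using r1 by simp

lemma nonneg: "y \<in> MM \<Longrightarrow> y \<ge> 0"
  by (induction rule: puiseux.induct) (use r1 in auto)

lemma divq: "y \<in> MM \<Longrightarrow> \<forall>k. y < r ^ k \<longrightarrow> (\<exists>m::int. y * of_int qq ^ k = of_int qq * of_int m)"
proof (induction rule: puiseux.induct)
  case zero then show ?case by auto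
next
  case (step y j)
  show ?case
  proof (intro allI impI)
    fix k assume h: "y + r ^ j < r ^ k"
    have y0: "y \<ge> 0" using nonneg step by simp
    have "r ^ j > 0" using r1 by simp
    hence "y < r ^ k" using h by simp
    then obtain m where m: "y * of_int qq ^ k = of_int qq * of_int m" using step by auto
    have "r ^ j < r ^ k" using h y0 by simp
    hence jk: "j < k" using r1 by (simp add: power_strict_increasing_iff)
    have "r ^ j * of_int qq ^ k = r ^ j * of_int qq ^ j * of_int qq ^ (k - j)"
      using jk by (simp add: power_add[symmetric])
    also have "\<dots> = of_int pp ^ j * of_int qq ^ (k - j)" by (simp add: rq)
    also have "\<dots> = of_int qq * of_int (pp ^ j * qq ^ (k - j - 1))"
    proof -
      have "k - j = Suc (k - j - 1)" using jk by simp
      hence "(of_int qq :: rat) ^ (k - j) = of_int qq * of_int qq ^ (k - j - 1)" by (metis power_Suc)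
      thus ?thesis by simp
    qed
    finally have "(y + r ^ j) * of_int qq ^ k = of_int qq * of_int (m + pp ^ j * qq ^ (k - j - 1))"
      using m by (simp add: algebra_simps)
    thus "\<exists>m::int. (y + r ^ j) * of_int qq ^ k = of_int qq * of_int m" by blast
  qed
qed

lemma atoms_eq: "atoms MM = range gg"
proof
  show "atoms MM \<subseteq> range gg"
  proof
    fix a assume a: "a \<in> atoms MM"
    hence aM: "a \<in> MM" and a0: "a \<noteq> 0" and irr: "\<forall>b\<in>MM. \<forall>c\<in>MM. a = b + c \<longrightarrow> b = 0 \<or> c = 0"
      by (auto simp: atoms_def)
    from aM a0 obtain y k where y: "y \<in> MM" "k \<in> N" "a = y + r ^ k"
      by (cases rule: puiseux.cases) auto
    have rk: "r ^ k \<in> MM" using puiseux.step[OF puiseux.zero y(2)] by simp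
    have "r ^ k \<noteq> 0" using r1 by simp
    hence "y = 0" using irr y rk by auto
    hence "a = r ^ k" using y by simp
    moreover obtain i where "k = ss i" using y(2) srange by auto
    ultimately show "a \<in> range gg" by auto
  qed
next
  show "range gg \<subseteq> atoms MM"
  proof
    fix a assume "a \<in> range gg"
    then obtain i where ai: "a = r ^ ss i" by auto
    define k where "k = ss i"
    have kN: "k \<in> N" using srange k_def by auto
    have rk: "r ^ k \<in> MM" using puiseux.step[OF puiseux.zero kN] by simp
    have nz: "r ^ k \<noteq> 0" using r1 by simp
    have "\<forall>b\<in>MM. \<forall>c\<in>MM. r ^ k = b + c \<longrightarrow> b = 0 \<or> c = 0"
    proof (intro ballI impI, rule ccontr)
      fix b c assume b: "b \<in> MM" and c: "c \<in> MM" and e: "r ^ k = b + c" and nn: "\<not> (b = 0 \<or> c = 0)"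
      have "b > 0" "c > 0" using nonneg[OF b] nonneg[OF c] nn by auto
      hence "b < r ^ k" "c < r ^ k" using e by auto
      then obtain m1 m2 where m1: "b * of_int qq ^ k = of_int qq * of_int m1"
        and m2: "c * of_int qq ^ k = of_int qq * of_int m2"
        using divq[OF b] divq[OF c] by blast
      have "(of_int (pp ^ k) :: rat) = of_int (qq * (m1 + m2))"
        using rq[of k] e m1 m2 by (simp add: algebra_simps)
      hence "pp ^ k = qq * (m1 + m2)" by (simp only: of_int_eq_iff)
      hence "qq dvd pp ^ k" by simp
      moreover have "coprime qq (pp ^ k)" using cop by (simp add: coprime_commute)
      ultimately have "is_unit qq" using coprime_absorb_left[of qq "pp ^ k"] by blast
      thus False using q2 by simp
    qed
    thus "a \<in> atoms MM" using ai k_def rk nz by (simp add: atoms_def)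
  qed
qed

lemma F_iff: "w \<in> factorizations MM x \<longleftrightarrow> set_mset w \<subseteq> range gg \<and> sum_mset w = x"
  by (simp add: factorizations_def atoms_eq)

lemma count_fact: "count (\<Sum>j\<le>M. replicate_mset (c j) (gg j)) (gg i) = (if i \<le> M then c i else 0)"
proof -
  have "count (\<Sum>j\<le>M. replicate_mset (c j) (gg j)) (gg i) = (\<Sum>j\<le>M. if j = i then c j else 0)"
    unfolding count_sum by (rule sum.cong) (auto simp: ginj)
  also have "\<dots> = (if i \<le> M then c i else 0)" by (simp add: sum.delta)
  finally show ?thesis .
qed

lemma sum_fact: "sum_mset (\<Sum>j\<le>M. replicate_mset (c j) (gg j)) = (\<Sum>j\<le>M. of_nat (c j) * gg j)"
  by (induction M) (simp_all add: atMost_Suc)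

lemma rep:
  assumes "set_mset w \<subseteq> gg ` {..M}"
  shows "w = (\<Sum>j\<le>M. replicate_mset (count w (gg j)) (gg j))"
proof (rule multiset_eqI)
  fix a
  show "count w a = count (\<Sum>j\<le>M. replicate_mset (count w (gg j)) (gg j)) a"
  proof (cases "a \<in> gg ` {..M}")
    case True then obtain i where "i \<le> M" "a = gg i" by auto
    then show ?thesis by (simp add: count_fact)
  next
    case False
    hence "count w a = 0" using assms by (meson count_eq_zero_iff subsetD)
    moreover have "count (\<Sum>j\<le>M. replicate_mset (count w (gg j)) (gg j)) a = 0"
      unfolding count_sum using False by (intro sum.neutral) auto
    ultimately show ?thesis by simp
  qed
qed

lemma sum_rep:
  assumes "set_mset w \<subseteq> gg ` {..M}"
  shows "sum_mset w = (\<Sum>j\<le>M. of_nat (count w (gg j)) * gg j)"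
  by (subst rep[OF assms]) (simp add: sum_fact)

lemma bound_idx:
  assumes "set_mset w \<subseteq> range gg" shows "\<exists>M. set_mset w \<subseteq> gg ` {..M}"
  using finite_range_bound[OF finite_set_mset assms] .

lemma mono_sub: "set_mset w \<subseteq> gg ` {..M} \<Longrightarrow> M \<le> M' \<Longrightarrow> set_mset w \<subseteq> gg ` {..M'}"
  by auto

lemma count_beyond: assumes "set_mset w \<subseteq> gg ` {..M}" "M < j" shows "count w (gg j) = 0"
proof (rule ccontr)
  assume "count w (gg j) \<noteq> 0"
  hence "gg j \<in># w" by (simp add: not_in_iff)
  then obtain i where "i \<le> M" "gg j = gg i" using assms(1) by auto
  hence "j = i" using ginj by blast
  thus False using assms(2) \<open>i \<le> M\<close> by simp
qed

lemma diff_sum: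
  assumes "set_mset w1 \<subseteq> gg ` {..M}" "set_mset w2 \<subseteq> gg ` {..M}" "sum_mset w1 = sum_mset w2"
  shows "(\<Sum>j\<le>M. of_int (int (count w1 (gg j)) - int (count w2 (gg j))) * r ^ ss j) = 0"
proof -
  have "(\<Sum>j\<le>M. of_int (int (count w1 (gg j)) - int (count w2 (gg j))) * r ^ ss j)
     = (\<Sum>j\<le>M. of_nat (count w1 (gg j)) * gg j) - (\<Sum>j\<le>M. of_nat (count w2 (gg j)) * gg j)"
    by (simp add: sum_subtractf[symmetric] algebra_simps)
  also have "\<dots> = 0" using sum_rep[OF assms(1)] sum_rep[OF assms(2)] assms(3) by simp
  finally show ?thesis .
qed

definition minC :: "rat multiset \<Rightarrow> bool" where
  "minC w \<longleftrightarrow> (\<forall>i. int (count w (gg i)) < pp ^ gap N i)"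
definition maxC :: "rat multiset \<Rightarrow> bool" where
  "maxC w \<longleftrightarrow> (\<forall>i\<ge>1. int (count w (gg i)) < qq ^ gap N (i - 1))"

lemma eq_from_counts:
  assumes "set_mset w1 \<subseteq> range gg" "set_mset w2 \<subseteq> range gg" "\<And>i. count w1 (gg i) = count w2 (gg i)"
  shows "w1 = w2"
proof (rule multiset_eqI)
  fix a show "count w1 a = count w2 a"
  proof (cases "a \<in> range gg")
    case True then show ?thesis using assms(3) by auto
  next
    case False
    hence "a \<notin># w1" "a \<notin># w2" using assms(1,2) by auto
    then show ?thesis by (simp add: not_in_iff)
  qed
qed

lemma U1:
  assumes w1: "w1 \<in> factorizations MM x" and w2: "w2 \<in> factorizations MM x"
    and c1: "minC w1" and c2: "minC w2"
  shows "w1 = w2"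
proof -
  have s1: "set_mset w1 \<subseteq> range gg" and s2: "set_mset w2 \<subseteq> range gg"
    and eqs: "sum_mset w1 = sum_mset w2" using w1 w2 by (auto simp: F_iff)
  obtain M1 where M1: "set_mset w1 \<subseteq> gg ` {..M1}" using bound_idx[OF s1] by blast
  obtain M2 where M2: "set_mset w2 \<subseteq> gg ` {..M2}" using bound_idx[OF s2] by blast
  have "count w1 (gg i) = count w2 (gg i)" for i
  proof (induction i rule: less_induct)
    case (less i)
    define M where "M = max (max M1 M2) i"
    define e where "e j = int (count w1 (gg j)) - int (count w2 (gg j))" for j
    have A1: "set_mset w1 \<subseteq> gg ` {..M}" using M1 by (rule mono_sub) (simp add: M_def)
    have A2: "set_mset w2 \<subseteq> gg ` {..M}" using M2 by (rule mono_sub) (simp add: M_def)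
    have S: "(\<Sum>j\<le>M. of_int (e j) * r ^ ss j) = 0" unfolding e_def by (rule diff_sum[OF A1 A2 eqs])
    have "pp ^ (ss (Suc i) - ss i) dvd e i"
      by (rule L1[OF r_eq q_pos _ cop smono _ _ S]) (use pq q_pos less in \<open>auto simp: M_def e_def\<close>)
    moreover have "\<bar>e i\<bar> < pp ^ (ss (Suc i) - ss i)"
    proof -
      have "int (count w1 (gg i)) < pp ^ (ss (Suc i) - ss i)" "int (count w2 (gg i)) < pp ^ (ss (Suc i) - ss i)"
        using c1 c2 unfolding minC_def gap_def by blast+
      thus ?thesis unfolding e_def by arith
    qed
    ultimately have "e i = 0" by (rule dvd_small_int)
    thus ?case by (simp add: e_def)
  qed
  thus ?thesis using eq_from_counts[OF s1 s2] by blast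
qed

end


context pset begin

lemma U2:
  assumes w1: "w1 \<in> factorizations MM x" and w2: "w2 \<in> factorizations MM x"
    and c1: "maxC w1" and c2: "maxC w2"
  shows "w1 = w2"
proof -
  have s1: "set_mset w1 \<subseteq> range gg" and s2: "set_mset w2 \<subseteq> range gg"
    and eqs: "sum_mset w1 = sum_mset w2" using w1 w2 by (auto simp: F_iff)
  obtain M1 where M1: "set_mset w1 \<subseteq> gg ` {..M1}" using bound_idx[OF s1] by blast
  obtain M2 where M2: "set_mset w2 \<subseteq> gg ` {..M2}" using bound_idx[OF s2] by blast
  define M where "M = max M1 M2"
  define e where "e j = int (count w1 (gg j)) - int (count w2 (gg j))" for j
  have A1: "set_mset w1 \<subseteq> gg ` {..M}" using M1 by (rule mono_sub) (simp add: M_def)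
  have A2: "set_mset w2 \<subseteq> gg ` {..M}" using M2 by (rule mono_sub) (simp add: M_def)
  have S: "(\<Sum>j\<le>M. of_int (e j) * r ^ ss j) = 0" unfolding e_def by (rule diff_sum[OF A1 A2 eqs])
  have bey: "e j = 0" if "M < j" for j
    using count_beyond[OF A1 that] count_beyond[OF A2 that] by (simp add: e_def)
  have all0: "\<forall>i. e i = 0"
  proof (rule ccontr)
    assume "\<not> (\<forall>i. e i = 0)"
    then obtain i0 where i0: "e i0 \<noteq> 0" by blast
    have sub: "{j. e j \<noteq> 0} \<subseteq> {..M}" using bey by (auto simp: not_less[symmetric])
    hence fin: "finite {j. e j \<noteq> 0}" by (rule finite_subset) simp
    define m where "m = Max {j. e j \<noteq> 0}"
    have mS: "e m \<noteq> 0" unfolding m_def using Max_in[OF fin] i0 by blast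
    have mM: "m \<le> M" using mS sub by auto
    have above: "e j = 0" if "m < j" for j
    proof (rule ccontr)
      assume "e j \<noteq> 0"
      hence "j \<le> m" unfolding m_def using Max_ge[OF fin] by blast
      thus False using that by simp
    qed
    show False
    proof (cases "m = 0")
      case True
      have "(\<Sum>j\<le>M. of_int (e j) * r ^ ss j) = (\<Sum>j\<in>{0}. of_int (e j) * r ^ ss j)"
        by (rule sum.mono_neutral_right) (use above True in auto)
      hence "of_int (e 0) * r ^ ss 0 = 0" using S by simp
      moreover have "r ^ ss 0 \<noteq> 0" using r1 by simp
      ultimately show False using mS True by simp
    next
      case False
      have "qq ^ (ss m - ss (m - 1)) dvd e m"
        by (rule L2[OF r_eq q_pos cop smono mM _ above S]) (use False in simp)
      moreover have "\<bar>e m\<bar> < qq ^ (ss m - ss (m - 1))"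
      proof -
        have g: "gap N (m - 1) = ss m - ss (m - 1)" using False by (simp add: gap_def)
        have "int (count w1 (gg m)) < qq ^ (ss m - ss (m - 1))" "int (count w2 (gg m)) < qq ^ (ss m - ss (m - 1))"
          using c1 c2 False unfolding maxC_def g[symmetric] by auto
        thus ?thesis unfolding e_def by arith
      qed
      ultimately have "e m = 0" by (rule dvd_small_int)
      thus False using mS by simp
    qed
  qed
  hence "count w1 (gg i) = count w2 (gg i)" for i using all0 by (simp add: e_def)
  thus ?thesis using eq_from_counts[OF s1 s2] by blast
qed

lemma pp_pos: "pp > 0" using pq q_pos by linarith

lemma gap_pos: "gap N i > 0"
  using smono unfolding gap_def by (simp add: strict_mono_def)

lemma exch:
  assumes w: "w \<in> factorizations MM x" and kc: "k \<le> count w (gg i)"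
    and val: "of_nat k * gg i = of_nat l * gg j"
  shows "w - replicate_mset k (gg i) + replicate_mset l (gg j) \<in> factorizations MM x"
    and "size (w - replicate_mset k (gg i) + replicate_mset l (gg j)) = size w - k + l"
    and "k \<le> size w"
proof -
  define A where "A = replicate_mset k (gg i)"
  have sub: "A \<subseteq># w" unfolding A_def by (rule count_le_replicate_mset_subset_eq[THEN iffD1, OF kc])
  have ws: "set_mset w \<subseteq> range gg" "sum_mset w = x" using w by (auto simp: F_iff)
  have "sum_mset w = sum_mset (w - A) + sum_mset A"
    using subset_mset.diff_add[OF sub] by (metis sum_mset.union)
  hence "sum_mset (w - A + replicate_mset l (gg j)) = x"
    using ws(2) val unfolding A_def by simp
  moreover have "set_mset (w - A + replicate_mset l (gg j)) \<subseteq> range gg"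
    using ws(1) by (auto dest: in_diffD)
  ultimately show "w - replicate_mset k (gg i) + replicate_mset l (gg j) \<in> factorizations MM x"
    unfolding A_def by (simp add: F_iff)
  have "size A \<le> size w" using sub by (rule size_mset_mono)
  thus "k \<le> size w" by (simp add: A_def)
  show "size (w - replicate_mset k (gg i) + replicate_mset l (gg j)) = size w - k + l"
    using size_Diff_submset[OF sub] by (simp add: A_def)
qed

lemma X1:
  assumes w: "w \<in> factorizations MM x" and nc: "\<not> minC w"
  shows "\<exists>w'\<in>factorizations MM x. size w' < size w"
proof -
  obtain i where ci: "int (count w (gg i)) \<ge> pp ^ gap N i" using nc unfolding minC_def by (auto simp: not_less)
  define G where "G = gap N i"
  define P where "P = nat pp"
  define Q where "Q = nat qq"
  have pP: "pp = int P" using pp_pos by (simp add: P_def)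
  have qQ: "qq = int Q" using q_pos by (simp add: Q_def)
  have QP: "Q < P" using pq q_pos unfolding P_def Q_def by linarith
  have G0: "G > 0" using gap_pos by (simp add: G_def)
  have kc: "P ^ G \<le> count w (gg i)" using ci unfolding G_def pP by (metis of_nat_le_iff of_nat_power)
  have lt: "ss i < ss (Suc i)" using smono by (simp add: strict_mono_def)
  have sS: "ss (Suc i) = ss i + G" unfolding G_def gap_def using lt by simp
  have "of_nat (P ^ G) * gg i = of_nat (Q ^ G) * gg (Suc i)"
  proof -
    have "r ^ G * of_nat Q ^ G = (of_nat P ^ G :: rat)" using rq[of G] unfolding pP qQ by simp
    thus ?thesis unfolding sS power_add by (simp add: algebra_simps)
  qed
  note E = exch[OF w kc this]
  have "Q ^ G < P ^ G" using QP G0 by (simp add: power_strict_mono)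
  hence "size w - P ^ G + Q ^ G < size w" using E(3) QP by linarith
  thus ?thesis using E(1,2) by metis
qed

lemma X2:
  assumes w: "w \<in> factorizations MM x" and nc: "\<not> maxC w"
  shows "\<exists>w'\<in>factorizations MM x. size w' > size w"
proof -
  obtain i where i1: "i \<ge> 1" and ci: "int (count w (gg i)) \<ge> qq ^ gap N (i - 1)"
    using nc unfolding maxC_def by (auto simp: not_less)
  define G where "G = gap N (i - 1)"
  define P where "P = nat pp"
  define Q where "Q = nat qq"
  have pP: "pp = int P" using pp_pos by (simp add: P_def)
  have qQ: "qq = int Q" using q_pos by (simp add: Q_def)
  have QP: "Q < P" using pq q_pos unfolding P_def Q_def by linarith
  have G0: "G > 0" using gap_pos by (simp add: G_def)
  have kc: "Q ^ G \<le> count w (gg i)" using ci unfolding G_def qQ by (metis of_nat_le_iff of_nat_power)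
  have Si: "Suc (i - 1) = i" using i1 by simp
  have lt: "ss (i - 1) < ss i" using smono i1 by (simp add: strict_mono_def)
  have sS: "ss i = ss (i - 1) + G" unfolding G_def gap_def Si using lt by simp
  have "of_nat (Q ^ G) * gg i = of_nat (P ^ G) * gg (i - 1)"
  proof -
    have "r ^ G * of_nat Q ^ G = (of_nat P ^ G :: rat)" using rq[of G] unfolding pP qQ by simp
    thus ?thesis unfolding sS power_add by (simp add: algebra_simps)
  qed
  note E = exch[OF w kc this]
  have "Q ^ G < P ^ G" using QP G0 by (simp add: power_strict_mono)
  hence "size w - Q ^ G + P ^ G > size w" using E(3) QP by linarith
  thus ?thesis using E(1,2) by metis
qed

lemma Ex1:
  assumes "z \<in> factorizations MM x"
  shows "\<exists>w. w \<in> factorizations MM x \<and> (\<forall>w'\<in>factorizations MM x. size w \<le> size w')"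
  using ex_has_least_nat[of "\<lambda>w. w \<in> factorizations MM x" z size] assms by blast

lemma size_bound:
  assumes "w \<in> factorizations MM x" shows "size w < nat \<lfloor>x\<rfloor> + 1"
proof -
  have "set_mset w \<subseteq> range gg" "sum_mset w = x" using assms by (auto simp: F_iff)
  hence "\<forall>a\<in>#w. 1 \<le> a" using gge1 by auto
  hence "of_nat (size w) \<le> x" using size_le_sum_mset \<open>sum_mset w = x\<close> by blast
  hence "int (size w) \<le> \<lfloor>x\<rfloor>" by (simp add: le_floor_iff)
  thus ?thesis by linarith
qed

lemma Ex2:
  assumes "z \<in> factorizations MM x"
  shows "\<exists>w. w \<in> factorizations MM x \<and> (\<forall>w'\<in>factorizations MM x. size w' \<le> size w)"
  using ex_has_greatest_nat[of "\<lambda>w. w \<in> factorizations MM x" z size "nat \<lfloor>x\<rfloor> + 1"] assms size_bound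
  by blast

lemma min_minC: "w \<in> factorizations MM x \<Longrightarrow> \<forall>w'\<in>factorizations MM x. size w \<le> size w' \<Longrightarrow> minC w"
  using X1 not_less by blast

lemma max_maxC: "w \<in> factorizations MM x \<Longrightarrow> \<forall>w'\<in>factorizations MM x. size w' \<le> size w \<Longrightarrow> maxC w"
  using X2 not_less by blast

lemma count_z: "count (fact_of r N n c) (gg i) = (if i \<le> n then c i else 0)"
  unfolding fact_of_def by (rule count_fact)

lemma minC_z: "minC (fact_of r N n c) \<longleftrightarrow> (\<forall>i\<le>n. int (c i) < pp ^ gap N i)"
  unfolding minC_def count_z using pp_pos by auto

lemma maxC_z: "maxC (fact_of r N n c) \<longleftrightarrow> (\<forall>i\<in>{1..n}. int (c i) < qq ^ gap N (i - 1))"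
  unfolding maxC_def count_z using q_pos by auto

end

theorem mainTheorem1:
  fixes N :: "nat set" and r x :: rat and n :: nat and c :: "nat \<Rightarrow> nat"
  assumes "numerical_monoid N"
    and "r > 1" and "r \<notin> \<nat>"
    and "atomic (puiseux r N)"
    and "x \<in> puiseux r N" and "x \<noteq> 0"
    and "fact_of r N n c \<in> factorizations (puiseux r N) x"
  shows
   "((size (fact_of r N n c) \<in> lengths (puiseux r N) x \<and>
       (\<forall>l\<in>lengths (puiseux r N) x. size (fact_of r N n c) \<le> l))
      \<longleftrightarrow> (\<forall>i\<le>n. int (c i) < numer r ^ gap N i))
    \<and> (\<exists>!w. w \<in> factorizations (puiseux r N) x \<and>
           (\<forall>w'\<in>factorizations (puiseux r N) x. size w \<le> size w'))
    \<and> ((size (fact_of r N n c) \<in> lengths (puiseux r N) x \<and>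
       (\<forall>l\<in>lengths (puiseux r N) x. l \<le> size (fact_of r N n c)))
      \<longleftrightarrow> (\<forall>i\<in>{1..n}. int (c i) < denom r ^ gap N (i - 1)))
    \<and> (\<exists>!w. w \<in> factorizations (puiseux r N) x \<and>
           (\<forall>w'\<in>factorizations (puiseux r N) x. size w' \<le> size w))
    \<and> ((\<forall>i\<le>n. int (c i) < denom r) \<longrightarrow> card (factorizations (puiseux r N) x) = 1)"
proof -
  interpret pset N r using assms(1-3) by unfold_locales
  define F where "F = factorizations (puiseux r N) x"
  define z where "z = fact_of r N n c"
  have zF: "z \<in> F" using assms(7) by (simp add: F_def z_def)
  have len: "lengths (puiseux r N) x = size ` F" by (simp add: lengths_def F_def)
  have uniqmin: "w1 = w2" if "w1 \<in> F" "\<forall>w'\<in>F. size w1 \<le> size w'" "w2 \<in> F" "\<forall>w'\<in>F. size w2 \<le> size w'" for w1 w2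
    using U1 min_minC that unfolding F_def by blast
  have uniqmax: "w1 = w2" if "w1 \<in> F" "\<forall>w'\<in>F. size w' \<le> size w1" "w2 \<in> F" "\<forall>w'\<in>F. size w' \<le> size w2" for w1 w2
    using U2 max_maxC that unfolding F_def by blast
  obtain wmin where wmin: "wmin \<in> F" "\<forall>w'\<in>F. size wmin \<le> size w'" using Ex1[OF zF[unfolded F_def]] F_def by blast
  obtain wmax where wmax: "wmax \<in> F" "\<forall>w'\<in>F. size w' \<le> size wmax" using Ex2[OF zF[unfolded F_def]] F_def by blast
  have P1: "(\<forall>w'\<in>F. size z \<le> size w') \<longleftrightarrow> minC z"
  proof
    assume "\<forall>w'\<in>F. size z \<le> size w'" thus "minC z" using min_minC zF unfolding F_def by blast
  next
    assume "minC z"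
    moreover have "minC wmin" using min_minC wmin unfolding F_def by blast
    ultimately have "z = wmin" using U1 zF wmin unfolding F_def by blast
    thus "\<forall>w'\<in>F. size z \<le> size w'" using wmin by simp
  qed
  have P3: "(\<forall>w'\<in>F. size w' \<le> size z) \<longleftrightarrow> maxC z"
  proof
    assume "\<forall>w'\<in>F. size w' \<le> size z" thus "maxC z" using max_maxC zF unfolding F_def by blast
  next
    assume "maxC z"
    moreover have "maxC wmax" using max_maxC wmax unfolding F_def by blast
    ultimately have "z = wmax" using U2 zF wmax unfolding F_def by blast
    thus "\<forall>w'\<in>F. size w' \<le> size z" using wmax by simp
  qed
  have part1: "((size z \<in> size ` F \<and> (\<forall>l\<in>size ` F. size z \<le> l)) \<longleftrightarrow> (\<forall>i\<le>n. int (c i) < numer r ^ gap N i))"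
    using P1 zF minC_z unfolding z_def by auto
  have part3: "((size z \<in> size ` F \<and> (\<forall>l\<in>size ` F. l \<le> size z)) \<longleftrightarrow> (\<forall>i\<in>{1..n}. int (c i) < denom r ^ gap N (i - 1)))"
    using P3 zF maxC_z unfolding z_def by auto
  have part2: "\<exists>!w. w \<in> F \<and> (\<forall>w'\<in>F. size w \<le> size w')"
    using wmin uniqmin by blast
  have part4: "\<exists>!w. w \<in> F \<and> (\<forall>w'\<in>F. size w' \<le> size w)"
    using wmax uniqmax by blast
  have part5: "card F = 1" if h: "\<forall>i\<le>n. int (c i) < denom r"
  proof -
    have "minC z" unfolding z_def minC_z
    proof (intro allI impI)
      fix i assume "i \<le> n"
      hence "int (c i) < denom r" using h by blast
      also have "\<dots> < numer r" using pq .
      also have "\<dots> \<le> numer r ^ gap N i" using pp_pos gap_pos[of i]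
        by (intro self_le_power) auto
      finally show "int (c i) < numer r ^ gap N i" .
    qed
    have "maxC z" unfolding z_def maxC_z
    proof (intro ballI)
      fix i assume "i \<in> {1..n}"
      hence "int (c i) < denom r" using h by auto
      also have "\<dots> \<le> denom r ^ gap N (i - 1)" using q2 gap_pos[of "i - 1"]
        by (intro self_le_power) auto
      finally show "int (c i) < denom r ^ gap N (i - 1)" .
    qed
    have zmin: "z = wmin" using P1 \<open>minC z\<close> zF wmin uniqmin by blast
    have zmax: "z = wmax" using P3 \<open>maxC z\<close> zF wmax uniqmax by blast
    have "F = {z}"
    proof
      show "F \<subseteq> {z}"
      proof
        fix w assume wF: "w \<in> F"
        have "size w = size z" using wmin(2) wmax(2) wF zmin zmax by (metis le_antisym)
        hence "\<forall>w'\<in>F. size w \<le> size w'" using wmin(2) zmin by simp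
        hence "w = z" using uniqmin[OF wF _ zF] P1 \<open>minC z\<close> by blast
        thus "w \<in> {z}" by simp
      qed
      show "{z} \<subseteq> F" using zF by simp
    qed
    thus ?thesis by simp
  qed
  show ?thesis using part1 part2 part3 part4 part5 unfolding len F_def[symmetric] z_def[symmetric] by blast
qed

end
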